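(* Let $\lambda_0,\lambda_1>0$, let $\boldsymbol\alpha_0^\star$ and $\boldsymbol\alpha_1^\star$ be the optimal solutions of $\max_{\boldsymbol\alpha\ge\mathbf0}D_{\lambda_0}(\boldsymbol\alpha)$ and $\max_{\boldsymbol\alpha\ge\mathbf0}D_{\lambda_1}(\boldsymbol\alpha)$, respectively, and let $\boldsymbol\alpha_0\in\mathbb R^{2nK}$ and $\epsilon\ge0$ satisfy $\|\boldsymbol\alpha_0-\boldsymbol\alpha_0^\star\|_2\le\epsilon$. Then $$\Big\|\boldsymbol\alpha_1^\star-\frac{\lambda_0+\lambda_1}{2\lambda_0}\boldsymbol\alpha_0\Big\|_2\le\Big\|\frac{\lambda_0-\lambda_1}{2\lambda_0}\boldsymbol\alpha_0\Big\|_2+\Big(\frac{\lambda_0+\lambda_1}{2\lambda_0}+\frac{|\lambda_0-\lambda_1|}{2\lambda_0}\Big)\epsilon.$$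
   Context: Let $n,K,p\ge1$ be integers, $[n]=\{1,\dots,n\}$. For each $i\in[n]$ let $\mathbf x_i\in\mathbb R^p$ have nonnegative entries and let $\mathcal D_i,\mathcal S_i\subseteq[n]$ be sets of size $K$. Put $\mathbf c_{ij}=(\mathbf x_i-\mathbf x_j)\circ(\mathbf x_i-\mathbf x_j)$ (entrywise product). Vectors in $\mathbb R^{2nK}$ are indexed by the pairs $(i,l)$, $l\in\mathcal D_i$ ("different-class pairs") and $(i,j)$, $j\in\mathcal S_i$ ("same-class pairs"). $\mathbf C\in\mathbb R^{p\times2nK}$ has column $\mathbf c_{il}$ for each different-class pair and $-\mathbf c_{ij}$ for each same-class pair. Fix $L\ge U\ge0$, $\eta>0$; let $\mathbf t\in\mathbb R^{2nK}$ have entry $L$ at different-class pairs and $-U$ at same-class pairs; $[z]_+=\max\{z,0\}$ entrywise; $\mathbf1$ the all-ones vector. For $\lambda>0$ and $\boldsymbol\alpha\in\mathbb R^{2nK}_{\ge0}$ define $$D_\lambda(\boldsymbol\alpha)=-\frac14\|\boldsymbol\alpha\|_2^2+\mathbf t^\top\boldsymbol\alpha-\frac{\lambda\eta}{2}\|\mathbf m_\lambda(\boldsymbol\alpha)\|_2^2,\qquad\mathbf m_\lambda(\boldsymbol\alpha)=\frac1{\lambda\eta}[\mathbf C\boldsymbol\alpha-\lambda\mathbf1]_+,$$ the dual of the primal problem $\min_{\mathbf m\ge\mathbf0}\sum_i\big[\sum_{l\in\mathcal D_i}([L-\mathbf m^\top\mathbf c_{il}]_+)^2+\sum_{j\in\mathcal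 S_i}([-U+\mathbf m^\top\mathbf c_{ij}]_+)^2\big]+\lambda(\mathbf m^\top\mathbf1+\frac\eta2\|\mathbf m\|_2^2)$. *)

theory Defs
  imports Complex_Main
begin

text \<open>Index set of the 2nK pairs: (i,l,True) for different-class pairs l in D_i,
 (i,j,False) for same-class pairs j in S_i, i in [n]. Feature coordinates are 0..<p.\<close>

definition pairs :: "nat \<Rightarrow> (nat \<Rightarrow> nat set) \<Rightarrow> (nat \<Rightarrow> nat set) \<Rightarrow> (nat \<times> nat \<times> bool) set" where
  "pairs n Ds Ss = {(i, j, True) | i j. i \<in> {1..n} \<and> j \<in> Ds i}
                 \<union> {(i, j, False) | i j. i \<in> {1..n} \<and> j \<in> Ss i}"

definition cvec :: "(nat \<Rightarrow> nat \<Rightarrow> real) \<Rightarrow> nat \<Rightarrow> nat \<Rightarrow> nat \<Rightarrow> real" where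
  "cvec x i j k = (x i k - x j k) * (x i k - x j k)"

definition Ccol :: "(nat \<Rightarrow> nat \<Rightarrow> real) \<Rightarrow> nat \<times> nat \<times> bool \<Rightarrow> nat \<Rightarrow> real" where
  "Ccol x q k = (case q of (i, j, b) \<Rightarrow> if b then cvec x i j k else - cvec x i j k)"

definition Cmul :: "(nat \<times> nat \<times> bool) set \<Rightarrow> (nat \<Rightarrow> nat \<Rightarrow> real) \<Rightarrow> (nat \<times> nat \<times> bool \<Rightarrow> real) \<Rightarrow> nat \<Rightarrow> real" where
  "Cmul P x \<alpha> k = (\<Sum>q\<in>P. Ccol x q k * \<alpha> q)"

definition tvec :: "real \<Rightarrow> real \<Rightarrow> nat \<times> nat \<times> bool \<Rightarrow> real" where
  "tvec L U q = (case q of (i, j, b) \<Rightarrow> if b then L else - U)"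

definition mvec :: "(nat \<times> nat \<times> bool) set \<Rightarrow> (nat \<Rightarrow> nat \<Rightarrow> real) \<Rightarrow> real \<Rightarrow> real
    \<Rightarrow> (nat \<times> nat \<times> bool \<Rightarrow> real) \<Rightarrow> nat \<Rightarrow> real" where
  "mvec P x eta lam \<alpha> k = (1 / (lam * eta)) * max (Cmul P x \<alpha> k - lam) 0"

definition Dual :: "(nat \<times> nat \<times> bool) set \<Rightarrow> nat \<Rightarrow> (nat \<Rightarrow> nat \<Rightarrow> real) \<Rightarrow> real \<Rightarrow> real \<Rightarrow> real
    \<Rightarrow> real \<Rightarrow> (nat \<times> nat \<times> bool \<Rightarrow> real) \<Rightarrow> real" where
  "Dual P p x L U eta lam \<alpha> =
     - (1/4) * (\<Sum>q\<in>P. (\<alpha> q)\<^sup>2) + (\<Sum>q\<in>P. tvec L U q * \<alpha> q)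
     - (lam * eta / 2) * (\<Sum>k<p. (mvec P x eta lam \<alpha> k)\<^sup>2)"

definition vnorm :: "(nat \<times> nat \<times> bool) set \<Rightarrow> (nat \<times> nat \<times> bool \<Rightarrow> real) \<Rightarrow> real" where
  "vnorm P v = sqrt (\<Sum>q\<in>P. (v q)\<^sup>2)"

definition dual_opt :: "(nat \<times> nat \<times> bool) set \<Rightarrow> nat \<Rightarrow> (nat \<Rightarrow> nat \<Rightarrow> real) \<Rightarrow> real \<Rightarrow> real \<Rightarrow> real
    \<Rightarrow> real \<Rightarrow> (nat \<times> nat \<times> bool \<Rightarrow> real) \<Rightarrow> bool" where
  "dual_opt P p x L U eta lam \<alpha> \<longleftrightarrow> (\<forall>q\<in>P. \<alpha> q \<ge> 0) \<and>
     (\<forall>\<beta>. (\<forall>q\<in>P. \<beta> q \<ge> 0) \<longrightarrow> Dual P p x L U eta lam \<beta> \<le> Dual P p x L U eta lam \<alpha>)"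

end

theory Submission
  imports Defs "HOL-Analysis.L2_Norm"
begin

lemma vnorm_L2: "vnorm P v = L2_set v P"
  unfolding vnorm_def L2_set_def by simp

lemma Cmul_comb:
  "Cmul P x (\<lambda>q. (1 - t) * a q + t * b q) k = (1 - t) * Cmul P x a k + t * Cmul P x b k"
proof -
  have "(\<Sum>q\<in>P. Ccol x q k * ((1 - t) * a q + t * b q)) = (\<Sum>q\<in>P. (1 - t) * (Ccol x q k * a q) + t * (Ccol x q k * b q))"
    by (rule sum.cong) (simp_all add: algebra_simps)
  then show ?thesis unfolding Cmul_def by (simp add: sum.distrib sum_distrib_left)
qed

lemma Cmul_scale:
  "Cmul P x (\<lambda>q. c * a q) k = c * Cmul P x a k"
  unfolding Cmul_def by (simp add: algebra_simps sum_distrib_left)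

lemma sq_convex:
  fixes A B t :: real
  assumes "0 \<le> t" "t \<le> 1"
  shows "((1 - t) * A + t * B)\<^sup>2 \<le> (1 - t) * A\<^sup>2 + t * B\<^sup>2"
proof -
  have "(1 - t) * A\<^sup>2 + t * B\<^sup>2 - ((1 - t) * A + t * B)\<^sup>2 = t * (1 - t) * (A - B)\<^sup>2"
    by (simp add: power2_eq_square algebra_simps)
  moreover have "t * (1 - t) * (A - B)\<^sup>2 \<ge> 0" using assms by simp
  ultimately show ?thesis by linarith
qed

lemma mvec_convex:
  assumes "0 \<le> t" "t \<le> 1" "eta > 0" "lam > 0"
  shows "(mvec P x eta lam (\<lambda>q. (1 - t) * a q + t * b q) k)\<^sup>2
    \<le> (1 - t) * (mvec P x eta lam a k)\<^sup>2 + t * (mvec P x eta lam b k)\<^sup>2"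
proof -
  define c where "c = 1 / (lam * eta)"
  have c0: "c > 0" using assms unfolding c_def by simp
  define A where "A = Cmul P x a k"
  define B where "B = Cmul P x b k"
  have mx: "max ((1 - t) * A + t * B - lam) 0 \<le> (1 - t) * max (A - lam) 0 + t * max (B - lam) 0"
  proof -
    have "(1 - t) * A + t * B - lam = (1 - t) * (A - lam) + t * (B - lam)"
      by (simp add: algebra_simps)
    moreover have "(1 - t) * (A - lam) \<le> (1 - t) * max (A - lam) 0"
      using assms by (intro mult_left_mono) auto
    moreover have "t * (B - lam) \<le> t * max (B - lam) 0"
      using assms by (intro mult_left_mono) auto
    moreover have "0 \<le> (1 - t) * max (A - lam) 0 + t * max (B - lam) 0"
      using assms by simp
    ultimately show ?thesis by linarith
  qed
  have le: "mvec P x eta lam (\<lambda>q. (1 - t) * a q + t * b q) k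
      \<le> (1 - t) * mvec P x eta lam a k + t * mvec P x eta lam b k"
    unfolding mvec_def Cmul_comb c_def[symmetric] A_def[symmetric] B_def[symmetric]
  proof -
    have "c * max ((1 - t) * A + t * B - lam) 0 \<le> c * ((1 - t) * max (A - lam) 0 + t * max (B - lam) 0)"
      using c0 mx by (intro mult_left_mono) auto
    also have "\<dots> = (1 - t) * (c * max (A - lam) 0) + t * (c * max (B - lam) 0)"
      by (simp add: algebra_simps)
    finally show "c * max ((1 - t) * A + t * B - lam) 0 \<le> (1 - t) * (c * max (A - lam) 0) + t * (c * max (B - lam) 0)" .
  qed
  have nn: "0 \<le> mvec P x eta lam (\<lambda>q. (1 - t) * a q + t * b q) k"
    unfolding mvec_def using c0 c_def by simp
  have "(mvec P x eta lam (\<lambda>q. (1 - t) * a q + t * b q) k)\<^sup>2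
      \<le> ((1 - t) * mvec P x eta lam a k + t * mvec P x eta lam b k)\<^sup>2"
    using le nn by (intro power_mono) auto
  also have "\<dots> \<le> (1 - t) * (mvec P x eta lam a k)\<^sup>2 + t * (mvec P x eta lam b k)\<^sup>2"
    using sq_convex assms by blast
  finally show ?thesis .
qed

lemma aux:
  fixes t Qz Qa Qb N Lz La Lb Kz Ka Kb :: real
  assumes "Qz = (1-t)*Qa + t*Qb - t*(1-t)*N" "Lz = (1-t)*La + t*Lb" "Kz \<le> (1-t)*Ka + t*Kb"
  shows "- (1/4)*Qz + Lz - Kz \<ge> (1-t)*(- (1/4)*Qa + La - Ka) + t*(- (1/4)*Qb + Lb - Kb) + t*(1-t)/4*N"
proof -
  have "(1-t)*(- (1/4)*Qa + La - Ka) + t*(- (1/4)*Qb + Lb - Kb) + t*(1-t)/4*N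
     = - (1/4)*((1-t)*Qa + t*Qb - t*(1-t)*N) + ((1-t)*La + t*Lb) - ((1-t)*Ka + t*Kb)"
    by (simp add: field_simps)
  then show ?thesis using assms by simp
qed

lemma Dual_concave:
  assumes "0 \<le> t" "t \<le> 1" "eta > 0" "lam > 0"
  shows "Dual P p x L U eta lam (\<lambda>q. (1 - t) * a q + t * b q)
    \<ge> (1 - t) * Dual P p x L U eta lam a + t * Dual P p x L U eta lam b
       + t * (1 - t) / 4 * (\<Sum>q\<in>P. (a q - b q)\<^sup>2)"
proof -
  let ?z = "\<lambda>q. (1 - t) * a q + t * b q"
  have Q: "(\<Sum>q\<in>P. (?z q)\<^sup>2) = (1 - t) * (\<Sum>q\<in>P. (a q)\<^sup>2) + t * (\<Sum>q\<in>P. (b q)\<^sup>2)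
      - t * (1 - t) * (\<Sum>q\<in>P. (a q - b q)\<^sup>2)"
  proof -
    have "(\<Sum>q\<in>P. (?z q)\<^sup>2) = (\<Sum>q\<in>P. (1 - t) * (a q)\<^sup>2 + t * (b q)\<^sup>2 - t * (1 - t) * (a q - b q)\<^sup>2)"
      by (rule sum.cong) (simp_all add: power2_eq_square algebra_simps)
    then show ?thesis by (simp add: sum.distrib sum_subtractf sum_distrib_left)
  qed
  have Lin: "(\<Sum>q\<in>P. tvec L U q * ?z q) = (1 - t) * (\<Sum>q\<in>P. tvec L U q * a q) + t * (\<Sum>q\<in>P. tvec L U q * b q)"
  proof -
    have "(\<Sum>q\<in>P. tvec L U q * ?z q) = (\<Sum>q\<in>P. (1 - t) * (tvec L U q * a q) + t * (tvec L U q * b q))"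
      by (rule sum.cong) (simp_all add: algebra_simps)
    then show ?thesis by (simp add: sum.distrib sum_distrib_left)
  qed
  define Mz where "Mz = (\<Sum>k<p. (mvec P x eta lam ?z k)\<^sup>2)"
  define Ma where "Ma = (\<Sum>k<p. (mvec P x eta lam a k)\<^sup>2)"
  define Mb where "Mb = (\<Sum>k<p. (mvec P x eta lam b k)\<^sup>2)"
  have M: "Mz \<le> (1 - t) * Ma + t * Mb"
  proof -
    have "(\<Sum>k<p. (mvec P x eta lam ?z k)\<^sup>2) \<le> (\<Sum>k<p. (1 - t) * (mvec P x eta lam a k)\<^sup>2 + t * (mvec P x eta lam b k)\<^sup>2)"
      by (rule sum_mono) (rule mvec_convex[OF assms])
    then show ?thesis unfolding Mz_def Ma_def Mb_def by (simp add: sum.distrib sum_distrib_left)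
  qed
  have le0: "lam * eta / 2 \<ge> 0" using assms by simp
  have M2: "(lam * eta / 2) * Mz \<le> (lam * eta / 2) * ((1 - t) * Ma + t * Mb)"
    using M le0 by (rule mult_left_mono)
  have M3: "(lam * eta / 2) * Mz \<le> (1 - t) * ((lam * eta / 2) * Ma) + t * ((lam * eta / 2) * Mb)"
  proof -
    have "(lam * eta / 2) * ((1 - t) * Ma + t * Mb) = (1 - t) * ((lam * eta / 2) * Ma) + t * ((lam * eta / 2) * Mb)"
      by (simp add: field_simps)
    then show ?thesis using M2 by linarith
  qed
  show ?thesis unfolding Dual_def Mz_def[symmetric] Ma_def[symmetric] Mb_def[symmetric]
    by (rule aux[OF Q Lin M3])
qed

lemma opt_gap:
  assumes opt: "dual_opt P p x L U eta lam a" and b: "\<forall>q\<in>P. b q \<ge> 0"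
    and "eta > 0" "lam > 0"
  shows "Dual P p x L U eta lam a - Dual P p x L U eta lam b \<ge> (\<Sum>q\<in>P. (b q - a q)\<^sup>2) / 4"
proof (rule ccontr)
  let ?D = "Dual P p x L U eta lam"
  define N where "N = (\<Sum>q\<in>P. (b q - a q)\<^sup>2)"
  define g where "g = ?D a - ?D b"
  assume "\<not> ?thesis"
  hence gN: "g < N / 4" unfolding g_def N_def by simp
  have g0: "g \<ge> 0" using opt b unfolding dual_opt_def g_def by auto
  have N0: "N > 0" using gN g0 by linarith
  define t where "t = (1 - 4 * g / N) / 2"
  have r: "4 * g / N < 1" using gN N0 by (simp add: field_simps)
  have r0: "4 * g / N \<ge> 0" using g0 N0 by simp
  have t0: "0 < t" "t \<le> 1" using r r0 unfolding t_def by auto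
  have a0: "\<forall>q\<in>P. a q \<ge> 0" using opt unfolding dual_opt_def by auto
  have zn: "\<forall>q\<in>P. (1 - t) * a q + t * b q \<ge> 0"
  proof
    fix q assume q: "q \<in> P"
    have "a q \<ge> 0" "b q \<ge> 0" using q a0 b by auto
    moreover have "1 - t \<ge> 0" "t \<ge> 0" using t0 by auto
    ultimately show "(1 - t) * a q + t * b q \<ge> 0" by (intro add_nonneg_nonneg mult_nonneg_nonneg)
  qed
  define Dz where "Dz = ?D (\<lambda>q. (1 - t) * a q + t * b q)"
  define Da where "Da = ?D a"
  define Db where "Db = ?D b"
  have h1: "Dz \<le> Da"
  proof -
    have all: "\<forall>\<beta>. (\<forall>q\<in>P. \<beta> q \<ge> 0) \<longrightarrow> ?D \<beta> \<le> ?D a" using opt unfolding dual_opt_def by (rule conjunct2)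
    show ?thesis unfolding Dz_def Da_def by (rule mp[OF spec[OF all, of "\<lambda>q. (1 - t) * a q + t * b q"] zn])
  qed
  have h2: "Dz \<ge> (1 - t) * Da + t * Db + t * (1 - t) / 4 * (\<Sum>q\<in>P. (a q - b q)\<^sup>2)"
    unfolding Dz_def Da_def Db_def
    by (rule Dual_concave[OF less_imp_le[OF t0(1)] t0(2) assms(3) assms(4)])
  have h3: "(\<Sum>q\<in>P. (a q - b q)\<^sup>2) = N" unfolding N_def
    by (rule sum.cong) (simp_all add: power2_commute)
  have h4: "(1 - t) * Da + t * Db + t * (1 - t) / 4 * N = Da - t * (Da - Db) + t * ((1 - t) / 4 * N)"
    by (simp add: algebra_simps)
  have "t * ((1 - t) / 4 * N) \<le> t * g" unfolding g_def Da_def[symmetric] Db_def[symmetric]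
    using h1 h2[unfolded h3] h4 by linarith
  hence "(1 - t) / 4 * N \<le> g" using t0(1) by (rule mult_left_le_imp_le)
  moreover have "(1 - t) / 4 * N > g"
  proof -
    have "1 - t = (1 + 4 * g / N) / 2"
    proof -
      define s where "s = 4 * g / N"
      have "t = (1 - s) / 2" unfolding t_def s_def ..
      then have "1 - t = (1 + s) / 2" by simp
      then show ?thesis unfolding s_def .
    qed
    hence e: "(1 - t) / 4 * N = (N + 4 * g) / 8" using N0 by (simp add: field_simps)
    have "(N + 4 * g) / 8 > g" using gN by (simp add: field_simps)
    then show ?thesis unfolding e .
  qed
  ultimately show False by simp
qed

definition Ffun :: "(nat \<times> nat \<times> bool) set \<Rightarrow> nat \<Rightarrow> (nat \<Rightarrow> nat \<Rightarrow> real) \<Rightarrow> real \<Rightarrow> real \<Rightarrow> real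
    \<Rightarrow> (nat \<times> nat \<times> bool \<Rightarrow> real) \<Rightarrow> real" where
  "Ffun P p x L U eta \<theta> = (\<Sum>q\<in>P. tvec L U q * \<theta> q) - (1 / (2 * eta)) * (\<Sum>k<p. (max (Cmul P x \<theta> k - 1) 0)\<^sup>2)"

lemma scale_aux:
  fixes eta lam S T M :: real
  assumes "eta > 0"
  shows "- (1/4) * (lam\<^sup>2 * S) + lam * T - (lam * eta / 2) * ((1 / eta)\<^sup>2 * M) = lam * (T - (1 / (2 * eta)) * M) - lam\<^sup>2 / 4 * S"
  using assms by (simp add: power2_eq_square field_simps)

lemma Dual_scale:
  assumes "eta > 0" "lam > 0"
  shows "Dual P p x L U eta lam (\<lambda>q. lam * \<theta> q) = lam * Ffun P p x L U eta \<theta> - lam\<^sup>2 / 4 * (\<Sum>q\<in>P. (\<theta> q)\<^sup>2)"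
proof -
  have m: "mvec P x eta lam (\<lambda>q. lam * \<theta> q) k = (1 / eta) * max (Cmul P x \<theta> k - 1) 0" for k
  proof -
    have "max (lam * Cmul P x \<theta> k - lam) 0 = lam * max (Cmul P x \<theta> k - 1) 0"
      using assms by (simp add: max_def algebra_simps)
    then show ?thesis unfolding mvec_def Cmul_scale using assms by simp
  qed
  have s1: "(\<Sum>q\<in>P. (lam * \<theta> q)\<^sup>2) = lam\<^sup>2 * (\<Sum>q\<in>P. (\<theta> q)\<^sup>2)"
    by (simp add: power_mult_distrib sum_distrib_left)
  have s2: "(\<Sum>q\<in>P. tvec L U q * (lam * \<theta> q)) = lam * (\<Sum>q\<in>P. tvec L U q * \<theta> q)"
    by (simp add: sum_distrib_left algebra_simps)
  have s3: "(\<Sum>k<p. (mvec P x eta lam (\<lambda>q. lam * \<theta> q) k)\<^sup>2) = (1 / eta)\<^sup>2 * (\<Sum>k<p. (max (Cmul P x \<theta> k - 1) 0)\<^sup>2)"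
    unfolding m sum_distrib_left by (rule sum.cong) (simp_all add: power_divide)
  show ?thesis unfolding Dual_def s1 s2 s3 Ffun_def
    by (rule scale_aux[OF assms(1)])
qed

theorem theorem3:
  fixes n K p :: nat and x :: "nat \<Rightarrow> nat \<Rightarrow> real" and Ds Ss :: "nat \<Rightarrow> nat set"
    and L U eta lam0 lam1 \<epsilon> :: real and a0s a1s a0 :: "nat \<times> nat \<times> bool \<Rightarrow> real"
  assumes "n \<ge> 1" "K \<ge> 1" "p \<ge> 1"
    and "\<And>i k. i \<in> {1..n} \<Longrightarrow> k < p \<Longrightarrow> x i k \<ge> 0"
    and "\<And>i. i \<in> {1..n} \<Longrightarrow> Ds i \<subseteq> {1..n} \<and> card (Ds i) = K"
    and "\<And>i. i \<in> {1..n} \<Longrightarrow> Ss i \<subseteq> {1..n} \<and> card (Ss i) = K"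
    and "L \<ge> U" "U \<ge> 0" "eta > 0" "lam0 > 0" "lam1 > 0"
    and "dual_opt (pairs n Ds Ss) p x L U eta lam0 a0s"
    and "dual_opt (pairs n Ds Ss) p x L U eta lam1 a1s"
    and "\<epsilon> \<ge> 0"
    and "vnorm (pairs n Ds Ss) (\<lambda>q. a0 q - a0s q) \<le> \<epsilon>"
  shows "vnorm (pairs n Ds Ss) (\<lambda>q. a1s q - (lam0 + lam1) / (2 * lam0) * a0 q)
         \<le> vnorm (pairs n Ds Ss) (\<lambda>q. (lam0 - lam1) / (2 * lam0) * a0 q)
           + ((lam0 + lam1) / (2 * lam0) + \<bar>lam0 - lam1\<bar> / (2 * lam0)) * \<epsilon>"
proof -
  define P where "P = pairs n Ds Ss"
  note opt0 = assms(12)[folded P_def] and opt1 = assms(13)[folded P_def]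
  have eta: "eta > 0" and l0: "lam0 > 0" and l1: "lam1 > 0" using assms by auto
  define th0 where "th0 = (\<lambda>q. a0s q / lam0)"
  define th1 where "th1 = (\<lambda>q. a1s q / lam1)"
  have e0: "a0s = (\<lambda>q. lam0 * th0 q)" using l0 unfolding th0_def by auto
  have e1: "a1s = (\<lambda>q. lam1 * th1 q)" using l1 unfolding th1_def by auto
  have nn0: "\<forall>q\<in>P. a0s q \<ge> 0" using opt0 unfolding dual_opt_def by auto
  have nn1: "\<forall>q\<in>P. a1s q \<ge> 0" using opt1 unfolding dual_opt_def by auto
  have th0nn: "\<forall>q\<in>P. th0 q \<ge> 0" using nn0 l0 unfolding th0_def by auto
  have th1nn: "\<forall>q\<in>P. th1 q \<ge> 0" using nn1 l1 unfolding th1_def by auto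
  define F0 where "F0 = Ffun P p x L U eta th0"
  define F1 where "F1 = Ffun P p x L U eta th1"
  define N0 where "N0 = (\<Sum>q\<in>P. (th0 q)\<^sup>2)"
  define N1 where "N1 = (\<Sum>q\<in>P. (th1 q)\<^sup>2)"
  define X where "X = (\<Sum>q\<in>P. th1 q * th0 q)"
  have Dd: "(\<Sum>q\<in>P. (th1 q - th0 q)\<^sup>2) = N1 - 2 * X + N0"
  proof -
    have "(\<Sum>q\<in>P. (th1 q - th0 q)\<^sup>2) = (\<Sum>q\<in>P. (th1 q)\<^sup>2 - 2 * (th1 q * th0 q) + (th0 q)\<^sup>2)"
      by (rule sum.cong) (simp_all add: power2_eq_square algebra_simps)
    then show ?thesis unfolding N0_def N1_def X_def
      by (simp add: sum.distrib sum_subtractf sum_distrib_left)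
  qed
  have sc: "(\<Sum>q\<in>P. (c * u q - c * v q)\<^sup>2) = c\<^sup>2 * (\<Sum>q\<in>P. (u q - v q)\<^sup>2)" for c :: real and u v :: "nat \<times> nat \<times> bool \<Rightarrow> real"
    by (simp add: sum_distrib_left power2_eq_square algebra_simps)
  have i0: "lam0 * F0 - lam0\<^sup>2 / 4 * N0 - (lam0 * F1 - lam0\<^sup>2 / 4 * N1) \<ge> lam0\<^sup>2 * (N1 - 2 * X + N0) / 4"
  proof -
    have "\<forall>q\<in>P. lam0 * th1 q \<ge> 0" using th1nn l0 by simp
    from opt_gap[OF opt0 this eta l0]
    show ?thesis unfolding e0 Dual_scale[OF eta l0] sc Dd F0_def F1_def N0_def N1_def by simp
  qed
  have i1: "lam1 * F1 - lam1\<^sup>2 / 4 * N1 - (lam1 * F0 - lam1\<^sup>2 / 4 * N0) \<ge> lam1\<^sup>2 * (N1 - 2 * X + N0) / 4"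
  proof -
    have "\<forall>q\<in>P. lam1 * th0 q \<ge> 0" using th0nn l1 by simp
    from opt_gap[OF opt1 this eta l1]
    have "lam1 * F1 - lam1\<^sup>2 / 4 * N1 - (lam1 * F0 - lam1\<^sup>2 / 4 * N0) \<ge> lam1\<^sup>2 * (\<Sum>q\<in>P. (th0 q - th1 q)\<^sup>2) / 4"
      unfolding e1 Dual_scale[OF eta l1] sc F0_def F1_def N0_def N1_def by simp
    moreover have "(\<Sum>q\<in>P. (th0 q - th1 q)\<^sup>2) = (\<Sum>q\<in>P. (th1 q - th0 q)\<^sup>2)"
      by (rule sum.cong) (simp_all add: power2_commute)
    ultimately show ?thesis using Dd by simp
  qed
  have j0: "F0 - lam0 / 4 * N0 - (F1 - lam0 / 4 * N1) \<ge> lam0 * (N1 - 2 * X + N0) / 4"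
  proof -
    have "lam0 * (F0 - lam0 / 4 * N0 - (F1 - lam0 / 4 * N1)) \<ge> lam0 * (lam0 * (N1 - 2 * X + N0) / 4)"
      using i0 by (simp add: power2_eq_square algebra_simps)
    then show ?thesis using l0 by simp
  qed
  have j1: "F1 - lam1 / 4 * N1 - (F0 - lam1 / 4 * N0) \<ge> lam1 * (N1 - 2 * X + N0) / 4"
  proof -
    have "lam1 * (F1 - lam1 / 4 * N1 - (F0 - lam1 / 4 * N0)) \<ge> lam1 * (lam1 * (N1 - 2 * X + N0) / 4)"
      using i1 by (simp add: power2_eq_square algebra_simps)
    then show ?thesis using l1 by simp
  qed
  have k: "lam1 * N1 - (lam0 + lam1) * X + lam0 * N0 \<le> 0"
    using j0 j1 by (simp add: ring_distribs mult.commute mult.left_commute)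
  define c where "c = (lam0 + lam1) / (2 * lam0)"
  define d where "d = (lam0 - lam1) / (2 * lam0)"
  have key: "(\<Sum>q\<in>P. (a1s q - c * a0s q)\<^sup>2) \<le> d\<^sup>2 * (\<Sum>q\<in>P. (a0s q)\<^sup>2)"
  proof -
    have ex: "(\<Sum>q\<in>P. (a1s q - c * a0s q)\<^sup>2) = lam1\<^sup>2 * N1 - 2 * c * lam0 * lam1 * X + c\<^sup>2 * lam0\<^sup>2 * N0"
    proof -
      have "(\<Sum>q\<in>P. (a1s q - c * a0s q)\<^sup>2) = (\<Sum>q\<in>P. lam1\<^sup>2 * (th1 q)\<^sup>2 - (2 * c * lam0 * lam1) * (th1 q * th0 q) + (c\<^sup>2 * lam0\<^sup>2) * (th0 q)\<^sup>2)"
        unfolding e0 e1 by (rule sum.cong) (simp_all add: power2_eq_square algebra_simps)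
      then show ?thesis unfolding N0_def N1_def X_def
        by (simp add: sum.distrib sum_subtractf sum_distrib_left)
    qed
    have ex2: "d\<^sup>2 * (\<Sum>q\<in>P. (a0s q)\<^sup>2) = d\<^sup>2 * lam0\<^sup>2 * N0"
      unfolding e0 N0_def by (simp add: power_mult_distrib sum_distrib_left mult.assoc)
    have cc: "2 * c * lam0 = lam0 + lam1" using l0 unfolding c_def by simp
    have cd: "c\<^sup>2 * lam0\<^sup>2 - d\<^sup>2 * lam0\<^sup>2 = lam0 * lam1"
      using l0 unfolding c_def d_def by (simp add: power2_eq_square field_simps)
    have "lam1 * (lam1 * N1 - (lam0 + lam1) * X + lam0 * N0) \<le> 0"
      using k l1 by (simp add: mult_nonneg_nonpos)
    hence "lam1\<^sup>2 * N1 - 2 * c * lam0 * lam1 * X + c\<^sup>2 * lam0\<^sup>2 * N0 - d\<^sup>2 * lam0\<^sup>2 * N0 \<le> 0"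
      using cc cd by (simp add: power2_eq_square algebra_simps)
    then show ?thesis by (simp only: ex ex2)
  qed
  have v1: "vnorm P (\<lambda>q. a1s q - c * a0s q) \<le> \<bar>d\<bar> * vnorm P a0s"
  proof -
    have "vnorm P (\<lambda>q. a1s q - c * a0s q) \<le> sqrt (d\<^sup>2 * (\<Sum>q\<in>P. (a0s q)\<^sup>2))"
      unfolding vnorm_def using key by simp
    also have "\<dots> = \<bar>d\<bar> * vnorm P a0s" unfolding vnorm_def by (simp add: real_sqrt_mult)
    finally show ?thesis .
  qed
  have eps: "L2_set (\<lambda>q. a0 q - a0s q) P \<le> \<epsilon>" using assms(15) unfolding P_def vnorm_L2 .
  have eps': "L2_set (\<lambda>q. a0s q - a0 q) P \<le> \<epsilon>"
  proof -
    have "L2_set (\<lambda>q. a0s q - a0 q) P = L2_set (\<lambda>q. a0 q - a0s q) P"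
      unfolding L2_set_def by (simp add: power2_commute)
    then show ?thesis using eps by simp
  qed
  have c0: "c \<ge> 0" using l0 l1 unfolding c_def by simp
  have t1: "L2_set (\<lambda>q. a1s q - c * a0 q) P \<le> L2_set (\<lambda>q. a1s q - c * a0s q) P + c * L2_set (\<lambda>q. a0s q - a0 q) P"
  proof -
    have "L2_set (\<lambda>q. a1s q - c * a0 q) P = L2_set (\<lambda>q. (a1s q - c * a0s q) + c * (a0s q - a0 q)) P"
      by (simp add: algebra_simps)
    also have "\<dots> \<le> L2_set (\<lambda>q. a1s q - c * a0s q) P + L2_set (\<lambda>q. c * (a0s q - a0 q)) P"
      by (rule L2_set_triangle_ineq)
    also have "L2_set (\<lambda>q. c * (a0s q - a0 q)) P = c * L2_set (\<lambda>q. a0s q - a0 q) P"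
      by (rule L2_set_right_distrib[OF c0, symmetric])
    finally show ?thesis .
  qed
  have t2: "L2_set a0s P \<le> L2_set a0 P + \<epsilon>"
  proof -
    have "L2_set a0s P = L2_set (\<lambda>q. a0 q + (a0s q - a0 q)) P" by simp
    also have "\<dots> \<le> L2_set a0 P + L2_set (\<lambda>q. a0s q - a0 q) P" by (rule L2_set_triangle_ineq)
    finally show ?thesis using eps' by simp
  qed
  have t3: "L2_set (\<lambda>q. d * a0 q) P = \<bar>d\<bar> * L2_set a0 P"
  proof -
    have "L2_set (\<lambda>q. d * a0 q) P = L2_set (\<lambda>q. \<bar>d\<bar> * a0 q) P"
      unfolding L2_set_def by (simp add: power_mult_distrib)
    then show ?thesis using L2_set_right_distrib[of "\<bar>d\<bar>" a0 P] by simp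
  qed
  have ad: "\<bar>d\<bar> = \<bar>lam0 - lam1\<bar> / (2 * lam0)" unfolding d_def using l0 by simp
  have "L2_set (\<lambda>q. a1s q - c * a0 q) P \<le> \<bar>d\<bar> * (L2_set a0 P + \<epsilon>) + c * \<epsilon>"
  proof -
    have "c * L2_set (\<lambda>q. a0s q - a0 q) P \<le> c * \<epsilon>" using eps' c0 by (rule mult_left_mono)
    moreover have "\<bar>d\<bar> * L2_set a0s P \<le> \<bar>d\<bar> * (L2_set a0 P + \<epsilon>)" using t2 by (simp add: mult_left_mono)
    ultimately show ?thesis using t1 v1 unfolding vnorm_L2 by linarith
  qed
  moreover have "\<bar>d\<bar> * (L2_set a0 P + \<epsilon>) + c * \<epsilon> = \<bar>d\<bar> * L2_set a0 P + (c + \<bar>d\<bar>) * \<epsilon>"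
    by (simp add: distrib_left distrib_right)
  ultimately have fin: "L2_set (\<lambda>q. a1s q - c * a0 q) P \<le> L2_set (\<lambda>q. d * a0 q) P + (c + \<bar>d\<bar>) * \<epsilon>"
    unfolding t3 by linarith
  show ?thesis using fin[unfolded ad] unfolding P_def vnorm_L2 c_def d_def .
qed

end
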